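(* The compactified Hilbert modular threefold $X$ has $8$ cusps, and the group $G=SL_2(\mathcal O)/\Gamma(p)$ acts transitively on them.
   Context: Let $w=\zeta_7+\zeta_7^{-1}$ with $\zeta_7=e^{2\pi i/7}$, $K=\mathbb Q(w)$, $\mathcal O=\mathbb Z[w]$, $p=(2-w)$ the prime over $7$. $\Gamma(p)$ is the principal congruence subgroup of $SL_2(\mathcal O)$ of level $p$, acting on $\mathfrak H^3$ through the three real embeddings of $K$. $X$ is the Baily–Borel compactification of $\Gamma(p)\backslash\mathfrak H^3$, obtained by adjoining cusps $\Gamma(p)\backslash\mathbb P^1(K)$. *)

theory Defs
  imports Complex_Main
begin

text \<open>We fix the real embedding w = zeta_7 + zeta_7^{-1} = 2 cos(2 pi/7) and realise
  K = Q(w), O = Z[w] as subsets of the reals (K has degree 3 with basis 1, w, w^2).\<close>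

definition w :: real where "w = 2 * cos (2 * pi / 7)"

definition KK :: "real set" where
  "KK = {of_rat a + of_rat b * w + of_rat c * w\<^sup>2 | a b c. True}"

definition OK :: "real set" where
  "OK = {of_int a + of_int b * w + of_int c * w\<^sup>2 | a b c. True}"

definition in_p :: "real \<Rightarrow> bool" where
  "in_p x \<longleftrightarrow> (\<exists>t\<in>OK. x = (2 - w) * t)"

text \<open>A 2x2 matrix (a b; c d) is encoded as the quadruple (a,b,c,d).\<close>
definition SL2O :: "(real \<times> real \<times> real \<times> real) set" where
  "SL2O = {(a,b,c,d). a \<in> OK \<and> b \<in> OK \<and> c \<in> OK \<and> d \<in> OK \<and> a * d - b * c = 1}"

definition Gamma_p :: "(real \<times> real \<times> real \<times> real) set" where
  "Gamma_p = {(a,b,c,d). (a,b,c,d) \<in> SL2O \<and> in_p (a - 1) \<and> in_p b \<and> in_p c \<and> in_p (d - 1)}"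

text \<open>Linear action of a matrix on a column vector (x,y); on P^1 this is z \<mapsto> (az+b)/(cz+d).\<close>
fun mvec :: "real \<times> real \<times> real \<times> real \<Rightarrow> real \<times> real \<Rightarrow> real \<times> real" where
  "mvec (a,b,c,d) (x,y) = (a * x + b * y, c * x + d * y)"

definition K2nz :: "(real \<times> real) set" where
  "K2nz = (KK \<times> KK) - {(0,0)}"

definition proj_rel :: "((real \<times> real) \<times> (real \<times> real)) set" where
  "proj_rel = {((x,y),(x',y')). (x,y) \<in> K2nz \<and> (x',y') \<in> K2nz \<and>
                  (\<exists>k\<in>KK. k \<noteq> 0 \<and> x' = k * x \<and> y' = k * y)}"

definition P1K :: "(real \<times> real) set set" where
  "P1K = K2nz // proj_rel"

definition act :: "real \<times> real \<times> real \<times> real \<Rightarrow> (real \<times> real) set \<Rightarrow> (real \<times> real) set" where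
  "act g P = mvec g ` P"

definition cusp_rel :: "((real \<times> real) set \<times> (real \<times> real) set) set" where
  "cusp_rel = {(P,Q). P \<in> P1K \<and> Q \<in> P1K \<and> (\<exists>g\<in>Gamma_p. Q = act g P)}"

definition cusps :: "(real \<times> real) set set set" where
  "cusps = P1K // cusp_rel"

end

theory Submission
  imports Defs
begin

section \<open>The number w\<close>

lemma w_facts: "w^3 = 2*w + 1 - w^2 \<and> 1 < w \<and> w < 2"
proof -
  define t where "t = 2*pi/7"
  define c where "c = cos t"
  have wc: "w = 2*c" unfolding w_def c_def t_def by simp
  have "4*t = 2*pi - 3*t" unfolding t_def by simp
  hence "cos (4*t) = cos (2*pi - 3*t)" by (rule arg_cong)
  hence "cos (4*t) = cos (3*t)" by (simp only: cos_2pi_minus)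
  moreover have "cos (4*t) = 2*(2*c^2-1)^2 - 1"
    using cos_double_cos[of "2*t"] cos_double_cos[of t] unfolding c_def
    by (simp add: mult.assoc)
  moreover have "cos (3*t) = 4*c^3 - 3*c" unfolding c_def by (rule cos_treble_cos)
  ultimately have eq: "(c - 1) * (8*c^3 + 4*c^2 - 4*c - 1) = 0"
    by (simp add: algebra_simps power2_eq_square power3_eq_cube)
  have c1: "c < 1"
  proof -
    have "cos t < cos 0" using cos_mono_less_eq[of t 0] unfolding t_def by simp
    thus ?thesis unfolding c_def by simp
  qed
  have c2: "1/2 < c"
  proof -
    have "cos (pi/3) < cos t" using cos_mono_less_eq[of "pi/3" t] unfolding t_def by simp
    thus ?thesis unfolding c_def using cos_60 by simp
  qed
  from eq c1 have "8*c^3 + 4*c^2 - 4*c - 1 = 0" by simp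
  hence "w^3 = 2*w + 1 - w^2" unfolding wc by (simp add: algebra_simps power2_eq_square power3_eq_cube)
  thus ?thesis using c1 c2 wc by simp
qed

lemma w_cubic: "w^3 = 2*w + 1 - w^2" using w_facts by simp

lemma rat_root_int:
  fixes r :: real and A B C :: int
  assumes "r \<in> \<rat>" "r^3 + A*r^2 + B*r + C = 0"
  shows "r \<in> \<int>"
proof -
  obtain p q :: int where q: "q > 0" "coprime p q" "r = of_int p / of_int q"
    using Rats_cases'[OF assms(1)] by metis
  have pq: "of_int p = r * of_int q" using q by simp
  have "real_of_int (p^3 + A*p^2*q + B*p*q^2 + C*q^3) = (r^3 + A*r^2 + B*r + C) * of_int q ^3"
    by (simp add: pq algebra_simps power3_eq_cube power2_eq_square)
  hence "p^3 + A*p^2*q + B*p*q^2 + C*q^3 = 0" using assms(2) by (metis mult_zero_left of_int_eq_0_iff)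
  hence "p^3 = q * (- A*p^2 - B*p*q - C*q^2)" by (simp add: algebra_simps power2_eq_square power3_eq_cube)
  hence "q dvd p^3" by simp
  moreover have "coprime q (p^3)" using q(2) by (simp add: coprime_commute)
  ultimately have "is_unit q" by (meson coprime_absorb_left coprime_common_divisor dvd_refl)
  hence "q = 1" using q(1) by simp
  thus ?thesis using q(3) by simp
qed

lemma w_not_rat: "w \<notin> \<rat>"
proof
  assume "w \<in> \<rat>"
  hence "w \<in> \<int>" using rat_root_int[of w 1 "-2" "-1"] w_cubic by simp
  then obtain n where "w = of_int n" by (auto elim: Ints_cases)
  hence "1 < n" "n < 2" using w_facts by auto
  thus False by linarith
qed

lemma lin_indep:
  fixes a b c :: real
  assumes "a \<in> \<rat>" "b \<in> \<rat>" "c \<in> \<rat>" "a + b*w + c*w^2 = 0"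
  shows "a = 0 \<and> b = 0 \<and> c = 0"
proof (cases "c = 0")
  case True
  show ?thesis
  proof (cases "b = 0")
    case True thus ?thesis using \<open>c = 0\<close> assms by simp
  next
    case False
    hence "w = - a / b" using assms(4) \<open>c=0\<close> by (simp add: field_simps)
    hence "w \<in> \<rat>" using assms(1,2) by (metis Rats_divide Rats_minus_iff)
    thus ?thesis using w_not_rat by simp
  qed
next
  case False
  define be where "be = b / c"
  define ga where "ga = a / c"
  have rq: "be \<in> \<rat>" "ga \<in> \<rat>" using assms unfolding be_def ga_def by auto
  have q: "w^2 = - be*w - ga" using assms(4) False unfolding be_def ga_def
    by (simp add: field_simps)
  have "(be^2 - ga - be - 2) * w + (be*ga - ga - 1) = 0"
    using q w_cubic by algebra
  show ?thesis
  proof (cases "be^2 - ga - be - 2 = 0")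
    case False
    hence weq: "w = - (be*ga - ga - 1) / (be^2 - ga - be - 2)"
      using \<open>(be^2 - ga - be - 2) * w + (be*ga - ga - 1) = 0\<close> by (simp add: field_simps)
    have "w \<in> \<rat>" apply (subst weq) using rq by simp
    thus ?thesis using w_not_rat by simp
  next
    case True
    hence g: "ga = be^2 - be - 2" by simp
    hence "be^3 + (-2)*be^2 + (-1)*be + 1 = 0"
    proof -
      have "be*ga - ga - 1 = 0"
        using \<open>(be^2 - ga - be - 2) * w + (be*ga - ga - 1) = 0\<close> True by simp
      thus ?thesis using g by algebra
    qed
    hence "be \<in> \<int>" using rat_root_int[of be "-2" "-1" 1] rq by simp
    then obtain n where n: "be = of_int n" by (auto elim: Ints_cases)
    have "real_of_int (n * (n^2 - 2*n - 1)) = -1"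
      using \<open>be^3 + (-2)*be^2 + (-1)*be + 1 = 0\<close> unfolding n
      by (simp add: algebra_simps power2_eq_square power3_eq_cube)
    hence "n * (n^2 - 2*n - 1) = -1" by linarith
    hence "n dvd 1" by (metis dvd_minus_iff dvd_triv_left)
    hence "n = 1 \<or> n = -1" by auto
    thus ?thesis using \<open>n * (n^2 - 2*n - 1) = -1\<close> by auto
  qed
qed

definition evi :: "int \<Rightarrow> int \<Rightarrow> int \<Rightarrow> real" where
  "evi a b c = of_int a + of_int b * w + of_int c * w^2"

lemma OK_eq: "OK = {evi a b c | a b c. True}"
  unfolding OK_def evi_def by simp

lemma OK_E: assumes "x \<in> OK" obtains a b c where "x = evi a b c"
  using assms unfolding OK_eq by blast

lemma evi_OK [simp]: "evi a b c \<in> OK"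
  unfolding OK_eq by blast

lemma evi_inj:
  assumes "evi a b c = evi a' b' c'"
  shows "a = a' \<and> b = b' \<and> c = c'"
proof -
  have "real_of_int (a - a') + real_of_int (b - b') * w + real_of_int (c - c') * w^2 = 0"
    using assms unfolding evi_def by (simp add: algebra_simps)
  hence "real_of_int (a - a') = 0 \<and> real_of_int (b - b') = 0 \<and> real_of_int (c - c') = 0"
    by (intro lin_indep) auto
  thus ?thesis by simp
qed

lemma evi_zero_iff: "evi a b c = 0 \<longleftrightarrow> a = 0 \<and> b = 0 \<and> c = 0"
proof
  assume "evi a b c = 0"
  hence "evi a b c = evi 0 0 0" by (simp add: evi_def)
  thus "a = 0 \<and> b = 0 \<and> c = 0" by (rule evi_inj)
qed (simp add: evi_def)

lemma evi_add: "evi a b c + evi d e f = evi (a+d) (b+e) (c+f)"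
  unfolding evi_def by (simp add: algebra_simps)

lemma evi_diff: "evi a b c - evi d e f = evi (a-d) (b-e) (c-f)"
  unfolding evi_def by (simp add: algebra_simps)

lemma evi_minus: "- evi a b c = evi (-a) (-b) (-c)"
  unfolding evi_def by (simp add: algebra_simps)

lemma evi_mult: "evi a b c * evi d e f =
  evi (a*d + b*f + c*e - c*f) (a*e + b*d + 2*b*f + 2*c*e - c*f) (a*f + b*e - b*f + c*d - c*e + 3*c*f)"
  unfolding evi_def using w_cubic by simp algebra

lemma evi_int: "evi n 0 0 = of_int n"
  unfolding evi_def by simp

lemma evi_w: "evi 0 1 0 = w"
  unfolding evi_def by simp

lemma OK_add: "x \<in> OK \<Longrightarrow> y \<in> OK \<Longrightarrow> x + y \<in> OK"
  by (auto elim!: OK_E simp: evi_add)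
lemma OK_diff: "x \<in> OK \<Longrightarrow> y \<in> OK \<Longrightarrow> x - y \<in> OK"
  by (auto elim!: OK_E simp: evi_diff)
lemma OK_minus: "x \<in> OK \<Longrightarrow> - x \<in> OK"
  by (auto elim!: OK_E simp: evi_minus)
lemma OK_mult: "x \<in> OK \<Longrightarrow> y \<in> OK \<Longrightarrow> x * y \<in> OK"
  by (auto elim!: OK_E simp: evi_mult)
lemma OK_int [simp]: "of_int n \<in> OK"
  by (metis evi_OK evi_int)
lemma OK_0 [simp]: "0 \<in> OK" using OK_int[of 0] by simp
lemma OK_1 [simp]: "1 \<in> OK" using OK_int[of 1] by simp
lemma OK_nat [simp]: "of_nat n \<in> OK" using OK_int[of "int n"] by simp
lemma OK_numeral [simp]: "numeral n \<in> OK" using OK_int[of "numeral n"] by simp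
lemma OK_w [simp]: "w \<in> OK" by (metis evi_OK evi_w)

section \<open>Norm\<close>

definition NF :: "int \<Rightarrow> int \<Rightarrow> int \<Rightarrow> int" where
  "NF a b c = a^3 - a^2*b + 5*a^2*c - 2*a*b^2 - a*b*c + 6*a*c^2 + b^3 - b^2*c - 2*b*c^2 + c^3"

lemma NF_conj: "evi a b c * evi (a - 2*b + 3*c) (-c) (b - c) * evi (a + b + 2*c) (c - b) (-b)
   = of_int (NF a b c)"
  unfolding evi_def NF_def using w_cubic by simp algebra

lemma NF_mult: "NF (a*d + b*f + c*e - c*f) (a*e + b*d + 2*b*f + 2*c*e - c*f) (a*f + b*e - b*f + c*d - c*e + 3*c*f)
  = NF a b c * NF d e f"
  unfolding NF_def by algebra

lemma NF_zero: "NF a b c = 0 \<longleftrightarrow> a = 0 \<and> b = 0 \<and> c = 0"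
proof
  assume "NF a b c = 0"
  hence "evi a b c * evi (a - 2*b + 3*c) (-c) (b - c) * evi (a + b + 2*c) (c - b) (-b) = 0"
    using NF_conj by simp
  hence "evi a b c = 0 \<or> evi (a - 2*b + 3*c) (-c) (b - c) = 0 \<or> evi (a + b + 2*c) (c - b) (-b) = 0"
    by simp
  thus "a = 0 \<and> b = 0 \<and> c = 0" unfolding evi_zero_iff by auto
qed (simp add: NF_def)

definition nrm :: "real \<Rightarrow> int" where
  "nrm x = (THE n. \<exists>a b c. x = evi a b c \<and> n = NF a b c)"

lemma nrm_evi [simp]: "nrm (evi a b c) = NF a b c"
  unfolding nrm_def by (rule the_equality) (auto dest: evi_inj)

lemma nrm_mult: assumes "x \<in> OK" "y \<in> OK" shows "nrm (x*y) = nrm x * nrm y"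
  using assms by (auto elim!: OK_E simp: evi_mult NF_mult)

lemma nrm_zero: assumes "x \<in> OK" shows "nrm x = 0 \<longleftrightarrow> x = 0"
  using assms by (auto elim!: OK_E simp: NF_zero evi_zero_iff)

lemma nrm_int: "nrm (of_int n) = n^3"
  using nrm_evi[of n 0 0] unfolding evi_int by (simp add: NF_def)

lemma adj_ex: assumes "x \<in> OK" shows "\<exists>x'\<in>OK. x * x' = of_int (nrm x)"
proof -
  obtain a b c where x: "x = evi a b c" using assms by (rule OK_E)
  show ?thesis
    by (rule bexI[of _ "evi (a - 2*b + 3*c) (-c) (b - c) * evi (a + b + 2*c) (c - b) (-b)"])
       (use NF_conj[of a b c] in \<open>auto simp: x mult.assoc intro!: OK_mult\<close>)
qed

section \<open>Euclidean property\<close>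

definition NR :: "real \<Rightarrow> real \<Rightarrow> real \<Rightarrow> real" where
  "NR a b c = a^3 - a^2*b + 5*a^2*c - 2*a*b^2 - a*b*c + 6*a*c^2 + b^3 - b^2*c - 2*b*c^2 + c^3"

definition QR :: "real \<Rightarrow> real \<Rightarrow> real \<Rightarrow> real" where
  "QR a b c = 3*a^2 - 2*a*b + 10*a*c + 5*b^2 - 8*b*c + 13*c^2"

definition TT :: "real \<Rightarrow> real \<Rightarrow> real \<Rightarrow> real" where
  "TT x y z = 7*(x^2+y^2+z^2) - 2*(x+y+z)^2"

lemma amgm3:
  fixes x y z :: real
  assumes "0 \<le> x" "0 \<le> y" "0 \<le> z"
  shows "27*x*y*z \<le> (x+y+z)^3"
proof -
  have id: "2*((x+y+z)^3 - 27*x*y*z) = (x+y+z)*((x-y)^2+(y-z)^2+(z-x)^2)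
      + 6*(x*(y-z)^2 + y*(z-x)^2 + z*(x-y)^2)"
    by algebra
  have "0 \<le> (x+y+z)*((x-y)^2+(y-z)^2+(z-x)^2)" using assms by simp
  moreover have "0 \<le> x*(y-z)^2 + y*(z-x)^2 + z*(x-y)^2" using assms by simp
  ultimately have "0 \<le> 2*((x+y+z)^3 - 27*x*y*z)" unfolding id by simp
  thus ?thesis by simp
qed

lemma NR_bound:
  assumes "QR a b c < 3"
  shows "\<bar>NR a b c\<bar> < 1"
proof -
  define L1 where "L1 = a + b*w + c*w^2"
  define L2 where "L2 = (a - 2*b + 3*c) + (-c)*w + (b - c)*w^2"
  define L3 where "L3 = (a + b + 2*c) + (c - b)*w + (-b)*w^2"
  have n: "NR a b c = L1*L2*L3" unfolding NR_def L1_def L2_def L3_def using w_cubic by algebra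
  have q: "QR a b c = L1^2 + L2^2 + L3^2" unfolding QR_def L1_def L2_def L3_def using w_cubic by algebra
  have "27*(L1^2*L2^2*L3^2) \<le> (L1^2 + L2^2 + L3^2)^3" using amgm3[of "L1^2" "L2^2" "L3^2"] by (simp add: mult.assoc)
  also have "\<dots> < 27" proof -
    have "0 \<le> L1^2 + L2^2 + L3^2" by simp
    moreover have "L1^2 + L2^2 + L3^2 < 3" using assms q by simp
    ultimately have "(L1^2 + L2^2 + L3^2)^3 < 3^3" by (intro power_strict_mono) auto
    thus ?thesis by simp
  qed
  finally have "(NR a b c)^2 < 1" unfolding n by (simp add: power_mult_distrib)
  thus ?thesis by (simp add: abs_less_iff power2_less_1_iff) 
qed

definition GP :: "real \<Rightarrow> real \<Rightarrow> real \<Rightarrow> bool" where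
  "GP x y z \<longleftrightarrow> (\<exists>(s1::int) (s2::int) (s3::int). \<exists>L. L \<le> x + s1 \<and> x + s1 \<le> L + 2/3 \<and>
     L \<le> y + s2 \<and> y + s2 \<le> L + 2/3 \<and> L \<le> z + s3 \<and> z + s3 \<le> L + 2/3)"

lemma GP_swap12: "GP x y z \<Longrightarrow> GP y x z" unfolding GP_def by blast
lemma GP_swap23: "GP x y z \<Longrightarrow> GP x z y" unfolding GP_def
  apply (elim exE conjE)
  subgoal for s1 s2 s3 L
    by (rule exI[of _ s1], rule exI[of _ s3], rule exI[of _ s2], rule exI[of _ L]) auto
  done

lemma GP_sorted:
  assumes "0 \<le> x" "x \<le> y" "y \<le> z" "z < 1"
  shows "GP x y z"
proof (cases "z - x \<le> 2/3")
  case True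
  thus ?thesis unfolding GP_def using assms
    by (intro exI[of _ 0] exI[of _ x]) auto
next
  case F1: False
  show ?thesis
  proof (cases "y - x \<ge> 1/3")
    case True
    thus ?thesis unfolding GP_def using assms
      by (intro exI[of _ 1] exI[of _ 0] exI[of _ 0] exI[of _ y]) auto
  next
    case False
    thus ?thesis unfolding GP_def using assms F1
      by (intro exI[of _ 1] exI[of _ 1] exI[of _ 0] exI[of _ z]) auto
  qed
qed

lemma GP_all:
  assumes "0 \<le> x" "x < 1" "0 \<le> y" "y < 1" "0 \<le> z" "z < 1"
  shows "GP x y z"
proof -
  have "x \<le> y \<and> y \<le> z \<or> x \<le> z \<and> z \<le> y \<or> y \<le> x \<and> x \<le> z \<or>
        y \<le> z \<and> z \<le> x \<or> z \<le> x \<and> x \<le> y \<or> z \<le> y \<and> y \<le> x" by linarith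
  thus ?thesis using assms GP_sorted GP_swap12 GP_swap23 by meson
qed

lemma shift3:
  fixes t1 t2 t3 L :: real
  assumes "L \<le> t1" "t1 \<le> L + 2/3" "L \<le> t2" "t2 \<le> L + 2/3" "L \<le> t3" "t3 \<le> L + 2/3"
  shows "\<exists>k::int. TT (t1 - k) (t2 - k) (t3 - k) < 3"
proof -
  define s where "s = (t1+t2+t3)/3"
  define k where "k = \<lfloor>s + 1/2\<rfloor>"
  define d where "d = s - k"
  have "of_int k \<le> s + 1/2" "s + 1/2 < of_int k + 1" unfolding k_def by linarith+
  hence d1: "-1/2 \<le> d \<and> d < 1/2" unfolding d_def by linarith
  have dd: "d^2 \<le> 1/4"
  proof -
    have "\<bar>d\<bar> \<le> 1/2" using d1 by (auto simp: abs_le_iff)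
    hence "\<bar>d\<bar>^2 \<le> (1/2)^2" by (intro power_mono) auto
    thus ?thesis by (simp add: power2_eq_square)
  qed
  define P where "P = (t1-t2)^2 + (t2-t3)^2 + (t1-t3)^2"
  have sq: "(u - v)^2 \<le> 2/3 * \<bar>u - v\<bar>" if "\<bar>u - v\<bar> \<le> 2/3" for u v :: real
  proof -
    have "(u-v)^2 = \<bar>u-v\<bar> * \<bar>u-v\<bar>" by (simp add: power2_eq_square)
    also have "\<dots> \<le> 2/3 * \<bar>u-v\<bar>" using that by (intro mult_right_mono) auto
    finally show ?thesis .
  qed
  have "P \<le> 2/3 * (\<bar>t1-t2\<bar> + \<bar>t2-t3\<bar> + \<bar>t1-t3\<bar>)"
  proof -
    have "\<bar>t1 - t2\<bar> \<le> 2/3" "\<bar>t2 - t3\<bar> \<le> 2/3" "\<bar>t1 - t3\<bar> \<le> 2/3"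
      using assms unfolding abs_le_iff by linarith+
    hence "(t1-t2)^2 \<le> 2/3 * \<bar>t1 - t2\<bar>" "(t2-t3)^2 \<le> 2/3 * \<bar>t2 - t3\<bar>" "(t1-t3)^2 \<le> 2/3 * \<bar>t1 - t3\<bar>"
      using sq by auto
    thus ?thesis unfolding P_def distrib_left by (intro add_mono)
  qed
  also have "\<dots> \<le> 2/3 * (4/3)" using assms by (simp add: abs_if)
  finally have P: "P \<le> 8/9" by simp
  have "TT (t1 - k) (t2 - k) (t3 - k) = 3*d^2 + 7/3*P"
    unfolding TT_def P_def d_def s_def by (simp add: field_simps power2_eq_square)
  also have "\<dots> < 3" using dd P by linarith
  finally show ?thesis by blast
qed

lemma QR_TT: "QR a b c = TT (-a + b - 2*c) (-a - c) (-a - 2*c)"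
  unfolding QR_def TT_def by (simp add: algebra_simps power2_eq_square)

lemma cover: "\<exists>(q1::int) (q2::int) (q3::int). QR (a - q1) (b - q2) (c - q3) < 3"
proof -
  define u1 where "u1 = -a + b - 2*c"
  define u2 where "u2 = -a - c"
  define u3 where "u3 = -a - 2*c"
  have "GP (u1 - \<lfloor>u1\<rfloor>) (u2 - \<lfloor>u2\<rfloor>) (u3 - \<lfloor>u3\<rfloor>)"
    using frac_ge_0[of u1] frac_lt_1[of u1] frac_ge_0[of u2] frac_lt_1[of u2]
      frac_ge_0[of u3] frac_lt_1[of u3] unfolding frac_def by (intro GP_all) auto
  then obtain s1 s2 s3 :: int and L where
    L: "L \<le> u1 - \<lfloor>u1\<rfloor> + s1" "u1 - \<lfloor>u1\<rfloor> + s1 \<le> L + 2/3"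
       "L \<le> u2 - \<lfloor>u2\<rfloor> + s2" "u2 - \<lfloor>u2\<rfloor> + s2 \<le> L + 2/3"
       "L \<le> u3 - \<lfloor>u3\<rfloor> + s3" "u3 - \<lfloor>u3\<rfloor> + s3 \<le> L + 2/3"
    unfolding GP_def by blast
  define m1 where "m1 = \<lfloor>u1\<rfloor> - s1"
  define m2 where "m2 = \<lfloor>u2\<rfloor> - s2"
  define m3 where "m3 = \<lfloor>u3\<rfloor> - s3"
  obtain k :: int where k: "TT (u1 - m1 - k) (u2 - m2 - k) (u3 - m3 - k) < 3"
    using shift3[of L "u1 - m1" "u2 - m2" "u3 - m3"] L unfolding m1_def m2_def m3_def by auto
  define n1 where "n1 = m1 + k"
  define n2 where "n2 = m2 + k"
  define n3 where "n3 = m3 + k"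
  have "QR (a - (n3 - 2*n2)) (b - (n1 - n3)) (c - (n2 - n3)) = TT (u1 - m1 - k) (u2 - m2 - k) (u3 - m3 - k)"
    unfolding QR_TT n1_def n2_def n3_def u1_def u2_def u3_def by (simp add: algebra_simps)
  hence "QR (a - of_int (n3 - 2*n2)) (b - of_int (n1 - n3)) (c - of_int (n2 - n3)) < 3" using k by simp
  thus ?thesis by blast
qed

lemma NF_NR: "real_of_int (NF a b c) = NR (of_int a) (of_int b) (of_int c)"
  unfolding NF_def NR_def by simp

lemma NR_hom: "NR (n*a) (n*b) (n*c) = n^3 * NR a b c"
  unfolding NR_def by (simp add: algebra_simps power2_eq_square power3_eq_cube)

lemma euclid:
  assumes "x \<in> OK" "y \<in> OK" "y \<noteq> 0"
  shows "\<exists>q\<in>OK. \<bar>nrm (x - q*y)\<bar> < \<bar>nrm y\<bar>"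
proof -
  define n where "n = nrm y"
  have n0: "n \<noteq> 0" using nrm_zero[OF assms(2)] assms(3) unfolding n_def by simp
  obtain y' where y': "y' \<in> OK" "y * y' = of_int n" using adj_ex[OF assms(2)] unfolding n_def by blast
  have "nrm y * nrm y' = n^3" using nrm_mult[OF assms(2) y'(1)] y'(2) nrm_int by simp
  hence ny': "nrm y' = n^2" using n0 unfolding n_def by (simp add: power2_eq_square power3_eq_cube)
  obtain a b c where z: "x * y' = evi a b c" using OK_mult[OF assms(1) y'(1)] by (rule OK_E)
  obtain q1 q2 q3 :: int where qc: "QR (a/n - q1) (b/n - q2) (c/n - q3) < 3" using cover[of "real_of_int a / real_of_int n" "real_of_int b / real_of_int n" "real_of_int c / real_of_int n"] by blast
  define q where "q = evi q1 q2 q3"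
  have qOK: "q \<in> OK" unfolding q_def by simp
  have "(x - q*y) * y' = evi a b c - q * of_int n"
    using z y'(2) by (simp add: algebra_simps)
  also have "\<dots> = evi (a - n*q1) (b - n*q2) (c - n*q3)"
    unfolding q_def evi_def by (simp add: algebra_simps)
  finally have e: "(x - q*y) * y' = evi (a - n*q1) (b - n*q2) (c - n*q3)" .
  have xq: "x - q*y \<in> OK" using assms qOK by (intro OK_diff OK_mult)
  have "real_of_int (nrm (x - q*y) * n^2) = real_of_int (NF (a - n*q1) (b - n*q2) (c - n*q3))"
    using nrm_mult[OF xq y'(1)] e ny' by simp
  also have "\<dots> = NR (n * (a/n - q1)) (n * (b/n - q2)) (n * (c/n - q3))"
    unfolding NF_NR using n0 by (simp add: algebra_simps)
  also have "\<dots> = n^3 * NR (a/n - q1) (b/n - q2) (c/n - q3)" by (simp add: NR_hom)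
  finally have "real_of_int (nrm (x - q*y)) * n^2 = n^2 * (n * NR (a/n - q1) (b/n - q2) (c/n - q3))"
    by (simp add: power2_eq_square power3_eq_cube algebra_simps)
  hence eq: "real_of_int (nrm (x - q*y)) = n * NR (a/n - q1) (b/n - q2) (c/n - q3)"
    using n0 by simp
  have "\<bar>real_of_int (nrm (x - q*y))\<bar> < \<bar>real_of_int n\<bar>"
    unfolding eq abs_mult using NR_bound[OF qc] n0 by simp
  hence "\<bar>nrm (x - q*y)\<bar> < \<bar>n\<bar>" by linarith
  thus ?thesis using qOK unfolding n_def by blast
qed

lemma bezout:
  "x \<in> OK \<Longrightarrow> y \<in> OK \<Longrightarrow> \<exists>d al be u v. d \<in> OK \<and> al \<in> OK \<and> be \<in> OK \<and> u \<in> OK \<and> v \<in> OK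
     \<and> d = al*x + be*y \<and> x = u*d \<and> y = v*d"
proof (induction "nat \<bar>nrm y\<bar>" arbitrary: x y rule: less_induct)
  case less
  show ?case
  proof (cases "y = 0")
    case True
    thus ?thesis using less.prems by (intro exI[of _ x] exI[of _ 1] exI[of _ 0] exI[of _ 1] exI[of _ 0]) auto
  next
    case False
    obtain q where q: "q \<in> OK" "\<bar>nrm (x - q*y)\<bar> < \<bar>nrm y\<bar>" using euclid[OF less.prems False] by blast
    define r where "r = x - q*y"
    have rOK: "r \<in> OK" unfolding r_def using q(1) less.prems by (intro OK_diff OK_mult)
    have "nat \<bar>nrm r\<bar> < nat \<bar>nrm y\<bar>" using q(2) unfolding r_def by simp
    then obtain d al be u v where h: "d \<in> OK" "al \<in> OK" "be \<in> OK" "u \<in> OK" "v \<in> OK"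
      "d = al*y + be*r" "y = u*d" "r = v*d"
      using less.hyps[of r y, OF _ less.prems(2) rOK] by blast
    have e1: "d = be*x + (al - be*q)*y" using h(6) unfolding r_def by (simp add: algebra_simps)
    have e2: "x = (v + q*u)*d" using h(7,8) unfolding r_def by (simp add: algebra_simps)
    have m: "al - be*q \<in> OK" "v + q*u \<in> OK"
      by (intro OK_diff OK_mult h q(1)) (intro OK_add OK_mult h q(1))
    show ?thesis
      by (rule exI[of _ d], rule exI[of _ be], rule exI[of _ "al - be*q"], rule exI[of _ "v + q*u"],
          rule exI[of _ u]) (intro conjI; (fact e1 | fact e2 | fact h | fact m))
  qed
qed

lemma of_rat_quot: assumes "quotient_of r = (p, q)" shows "(of_rat r :: real) = of_int p / of_int q"
proof -
  have "r = of_int p / of_int q" by (rule quotient_of_div[OF assms])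
  thus ?thesis by (simp add: of_rat_divide)
qed

lemma KK_char: "k \<in> KK \<longleftrightarrow> (\<exists>m::int. m > 0 \<and> of_int m * k \<in> OK)"
proof
  assume "k \<in> KK"
  then obtain a b c where k: "k = of_rat a + of_rat b * w + of_rat c * w^2" unfolding KK_def by blast
  obtain pa qa where a: "quotient_of a = (pa, qa)" by force
  obtain pb qb where b: "quotient_of b = (pb, qb)" by force
  obtain pc qc where c: "quotient_of c = (pc, qc)" by force
  have pos: "qa > 0" "qb > 0" "qc > 0" using a b c quotient_of_denom_pos by blast+
  have "of_int (qa*qb*qc) * k = evi (pa*qb*qc) (pb*qa*qc) (pc*qa*qb)"
    unfolding k evi_def of_rat_quot[OF a] of_rat_quot[OF b] of_rat_quot[OF c] using pos
    by (simp add: field_simps)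
  moreover have "qa*qb*qc > 0" using pos by simp
  ultimately show "\<exists>m::int. m > 0 \<and> of_int m * k \<in> OK" by (metis evi_OK)
next
  assume "\<exists>m::int. m > 0 \<and> of_int m * k \<in> OK"
  then obtain m a b c where m: "m > 0" "of_int m * k = evi a b c" by (metis OK_E)
  have km: "k = evi a b c / of_int m" using m by (simp add: field_simps)
  have "k = of_rat (of_int a / of_int m) + of_rat (of_int b / of_int m) * w + of_rat (of_int c / of_int m) * w^2"
    unfolding km evi_def by (simp add: of_rat_divide add_divide_distrib)
  thus "k \<in> KK" unfolding KK_def by blast
qed

lemma OK_KK: "x \<in> OK \<Longrightarrow> x \<in> KK"
  unfolding KK_char by (intro exI[of _ 1]) auto

lemma KK_mult: assumes "x \<in> KK" "y \<in> KK" shows "x * y \<in> KK"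
proof -
  obtain m n :: int where "m > 0" "of_int m * x \<in> OK" "n > 0" "of_int n * y \<in> OK"
    using assms unfolding KK_char by blast
  hence "m*n > 0" "of_int (m*n) * (x*y) \<in> OK"
    using OK_mult[of "of_int m * x" "of_int n * y"] by (auto simp: algebra_simps)
  thus ?thesis unfolding KK_char by blast
qed

lemma KK_add: assumes "x \<in> KK" "y \<in> KK" shows "x + y \<in> KK"
proof -
  obtain m n :: int where "m > 0" "of_int m * x \<in> OK" "n > 0" "of_int n * y \<in> OK"
    using assms unfolding KK_char by blast
  hence "m*n > 0" "of_int (m*n) * (x+y) \<in> OK"
    using OK_add[OF OK_mult[of "of_int n" "of_int m * x"] OK_mult[of "of_int m" "of_int n * y"]]
    by (auto simp: algebra_simps)
  thus ?thesis unfolding KK_char by blast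
qed

lemma KK_minus: assumes "x \<in> KK" shows "- x \<in> KK"
  using assms unfolding KK_char by (metis OK_minus mult_minus_right)

lemma KK_int [simp]: "of_int n \<in> KK" by (simp add: OK_KK)
lemma KK_1 [simp]: "1 \<in> KK" by (simp add: OK_KK)
lemma KK_0 [simp]: "0 \<in> KK" by (simp add: OK_KK)

lemma OK_inv: assumes "z \<in> OK" "z \<noteq> 0" shows "inverse z \<in> KK"
proof -
  obtain z' where z': "z' \<in> OK" "z * z' = of_int (nrm z)" using adj_ex[OF assms(1)] by blast
  define n where "n = nrm z"
  have n0: "n \<noteq> 0" using nrm_zero[OF assms(1)] assms(2) unfolding n_def by simp
  have inv: "inverse z = z' / of_int n" using z' n0 assms(2) unfolding n_def by (simp add: field_simps)
  have "of_int \<bar>n\<bar> * inverse z = of_int (sgn n) * z'" unfolding inv using n0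
    by (simp add: abs_sgn field_simps)
  hence "of_int \<bar>n\<bar> * inverse z \<in> OK" using z'(1) by (simp add: OK_mult)
  moreover have "\<bar>n\<bar> > 0" using n0 by simp
  ultimately show ?thesis unfolding KK_char by blast
qed

lemma KK_inv: assumes "k \<in> KK" "k \<noteq> 0" shows "inverse k \<in> KK"
proof -
  obtain m :: int where m: "m > 0" "of_int m * k \<in> OK" using assms(1) unfolding KK_char by blast
  have "of_int m * k \<noteq> 0" using m(1) assms(2) by simp
  hence "inverse (of_int m * k) \<in> KK" using OK_inv m(2) by blast
  hence mem: "of_int m * inverse (of_int m * k) \<in> KK" by (intro KK_mult) auto
  have e: "of_int m * inverse (of_int m * k) = inverse k" using m(1) by (simp add: field_simps)
  show ?thesis using mem unfolding e .
qed

section \<open>The prime p\<close>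

lemma OK_neg1 [simp]: "-1 \<in> OK" using OK_minus[OF OK_1] .

lemma OK_pow [simp]: "x \<in> OK \<Longrightarrow> x ^ n \<in> OK"
  by (induction n) (auto intro: OK_mult)

lemma OK_2w [simp]: "2 - w \<in> OK" by (intro OK_diff) auto

lemma in_p_OK: "in_p x \<Longrightarrow> x \<in> OK"
  unfolding in_p_def using OK_mult[OF OK_2w] by blast

lemma in_p_0 [simp]: "in_p 0"
  unfolding in_p_def by (intro bexI[of _ 0]) auto

lemma in_p_add: assumes "in_p x" "in_p y" shows "in_p (x + y)"
proof -
  obtain s t where "s \<in> OK" "t \<in> OK" "x = (2 - w) * s" "y = (2 - w) * t"
    using assms unfolding in_p_def by blast
  moreover have "(2 - w) * s + (2 - w) * t = (2 - w) * (s + t)" by (simp add: algebra_simps)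
  ultimately show ?thesis unfolding in_p_def using OK_add by metis
qed

lemma in_p_diff: assumes "in_p x" "in_p y" shows "in_p (x - y)"
proof -
  obtain s t where "s \<in> OK" "t \<in> OK" "x = (2 - w) * s" "y = (2 - w) * t"
    using assms unfolding in_p_def by blast
  moreover have "(2 - w) * s - (2 - w) * t = (2 - w) * (s - t)" by (simp add: algebra_simps)
  ultimately show ?thesis unfolding in_p_def using OK_diff by metis
qed

lemma in_p_minus: "in_p x \<Longrightarrow> in_p (- x)"
  using in_p_diff[of 0 x] by simp

lemma in_p_mult: assumes "a \<in> OK" "in_p x" shows "in_p (a * x)"
proof -
  obtain t where "t \<in> OK" "x = (2 - w) * t" using assms(2) unfolding in_p_def by blast
  moreover have "a * ((2 - w) * t) = (2 - w) * (a * t)" by (simp add: algebra_simps)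
  ultimately show ?thesis unfolding in_p_def using OK_mult[OF assms(1)] by metis
qed

lemma in_p_mult': "a \<in> OK \<Longrightarrow> in_p x \<Longrightarrow> in_p (x * a)"
  using in_p_mult by (simp add: mult.commute)

lemma in_p_2w: "in_p (w - 2)"
  unfolding in_p_def by (intro bexI[of _ "-1"]) simp_all

lemma in_p_7: "in_p 7"
proof -
  have "7 = (2 - w) * (w^2 + 3*w + 4)" using w_cubic by algebra
  moreover have "w^2 + 3*w + 4 \<in> OK" by (intro OK_add OK_mult) auto
  ultimately show ?thesis unfolding in_p_def by blast
qed

lemma not_in_p_1: "\<not> in_p 1"
proof
  assume "in_p 1"
  then obtain t where "t \<in> OK" "1 = (2 - w) * t" unfolding in_p_def by blast
  moreover have "2 - w = evi 2 (-1) 0" unfolding evi_def by simp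
  ultimately obtain a b c where "1 = evi 2 (-1) 0 * evi a b c"
    by (metis OK_E)
  hence "evi 1 0 0 = evi (2*a - c) (2*b - a - 2*c) (3*c - b)" unfolding evi_mult evi_int by simp
  hence "1 = 2*a - c" "0 = 2*b - a - 2*c" "0 = 3*c - b" by (auto dest: evi_inj)
  hence "7*c = 1" by linarith
  thus False by presburger
qed

lemma inv7: assumes "\<not> 7 dvd (n::int)"
  shows "\<exists>v::int. v \<in> {1,2,4,-1,-2,-4} \<and> 7 dvd (v*n - 1)"
proof -
  have "n mod 7 = 1 \<or> n mod 7 = 2 \<or> n mod 7 = 3 \<or> n mod 7 = 4 \<or> n mod 7 = 5 \<or> n mod 7 = 6"
    using assms by presburger
  then consider "n mod 7 = 1" | "n mod 7 = 2" | "n mod 7 = 3" | "n mod 7 = 4" | "n mod 7 = 5" | "n mod 7 = 6"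
    by blast
  thus ?thesis
  proof cases
    case 1 thus ?thesis by (intro exI[of _ 1] conjI) (simp, presburger)
  next
    case 2 thus ?thesis by (intro exI[of _ 4] conjI) (simp, presburger)
  next
    case 3 thus ?thesis by (intro exI[of _ "-2"] conjI) (simp, presburger)
  next
    case 4 thus ?thesis by (intro exI[of _ 2] conjI) (simp, presburger)
  next
    case 5 thus ?thesis by (intro exI[of _ "-4"] conjI) (simp, presburger)
  next
    case 6 thus ?thesis by (intro exI[of _ "-1"] conjI) (simp, presburger)
  qed
qed

lemma in_p_int_dvd: "7 dvd n \<Longrightarrow> in_p (of_int n)"
proof -
  assume "7 dvd n"
  then obtain k where "n = 7 * k" by blast
  hence "of_int n = of_int k * (7::real)" by simp
  thus ?thesis using in_p_mult[OF OK_int in_p_7, of k] by simp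
qed

lemma in_p_int: "in_p (of_int n) \<longleftrightarrow> 7 dvd n"
proof
  assume h: "in_p (of_int n)"
  show "7 dvd n"
  proof (rule ccontr)
    assume "\<not> 7 dvd n"
    then obtain v :: int where "7 dvd (v*n - 1)" using inv7 by blast
    hence "in_p (of_int (v*n - 1))" by (rule in_p_int_dvd)
    moreover have "in_p (of_int v * of_int n)" using h by (intro in_p_mult) auto
    ultimately have "in_p (of_int v * of_int n - of_int (v*n - 1))" by (intro in_p_diff)
    thus False using not_in_p_1 by simp
  qed
qed (rule in_p_int_dvd)

lemma residue: assumes "x \<in> OK" shows "\<exists>n::int. in_p (x - of_int n)"
proof -
  obtain a b c where x: "x = evi a b c" using assms by (rule OK_E)
  have "x - of_int (a + 2*b + 4*c) = (of_int b + of_int c * (w + 2)) * (w - 2)"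
    unfolding x evi_def by (simp add: algebra_simps power2_eq_square)
  moreover have "of_int b + of_int c * (w + 2) \<in> OK" by (intro OK_add OK_mult) auto
  ultimately show ?thesis using in_p_mult[OF _ in_p_2w] by metis
qed

lemma residue7: assumes "x \<in> OK" shows "\<exists>n::int. 0 \<le> n \<and> n < 7 \<and> in_p (x - of_int n)"
proof -
  obtain n :: int where n: "in_p (x - of_int n)" using residue[OF assms] by blast
  have "in_p (of_int (n - n mod 7))" by (rule in_p_int_dvd) (simp add: minus_mod_eq_mult_div)
  hence "in_p (x - of_int n + of_int (n - n mod 7))" using n by (rule in_p_add[rotated])
  hence "in_p (x - of_int (n mod 7))" by simp
  thus ?thesis by (intro exI[of _ "n mod 7"]) simp
qed

definition winv :: real where "winv = w^2 + w - 2"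

lemma winv: "w * winv = 1" "winv \<in> OK"
  unfolding winv_def using w_cubic by (algebra, intro OK_add OK_diff OK_mult) auto

lemma unit_choice: assumes "\<not> 7 dvd n"
  shows "\<exists>u u'. u \<in> OK \<and> u' \<in> OK \<and> u * u' = 1 \<and> in_p (u * of_int n - 1)"
proof -
  obtain v :: int where v: "v \<in> {1,2,4,-1,-2,-4}" "7 dvd (v*n - 1)" using inv7[OF assms] by blast
  have key: "in_p (u * of_int n - 1)" if "in_p (u - of_int v)" for u
  proof -
    have "u * of_int n - 1 = of_int n * (u - of_int v) + of_int (v*n - 1)" by (simp add: algebra_simps)
    thus ?thesis using in_p_mult[OF OK_int that] in_p_int_dvd[OF v(2)] in_p_add by metis
  qed
  have w2: "in_p (w^2 - 4)"
  proof -
    have "w^2 - 4 = (w + 2) * (w - 2)" by (simp add: algebra_simps power2_eq_square)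
    thus ?thesis using in_p_mult[OF _ in_p_2w, of "w+2"] by (simp add: OK_add)
  qed
  have wOK: "w^2 \<in> OK" "winv^2 \<in> OK" using winv by auto
  have ww: "w^2 * winv^2 = 1" using winv(1) by (metis power_mult_distrib power_one)
  from v(1) consider "v = 1" | "v = 2" | "v = 4" | "v = -1" | "v = -2" | "v = -4" by auto
  thus ?thesis
  proof cases
    case 1 thus ?thesis using key[of 1] by (intro exI[of _ 1]) auto
  next
    case 2 thus ?thesis using key[of w] in_p_2w winv by (intro exI[of _ w] exI[of _ winv]) auto
  next
    case 3 thus ?thesis using key[of "w^2"] w2 wOK ww by (intro exI[of _ "w^2"] exI[of _ "winv^2"]) auto
  next
    case 4 thus ?thesis using key[of "-1"] OK_minus[OF OK_1] by (intro exI[of _ "-1"] exI[of _ "-1"]) auto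
  next
    case 5 thus ?thesis using key[of "-w"] in_p_minus[OF in_p_2w] winv
      by (intro exI[of _ "-w"] exI[of _ "-winv"]) (auto intro: OK_minus)
  next
    case 6 thus ?thesis using key[of "-(w^2)"] in_p_minus[OF w2] wOK ww
      by (intro exI[of _ "-(w^2)"] exI[of _ "-(winv^2)"]) (auto intro: OK_minus)
  qed
qed

section \<open>Projective line\<close>

definition cls :: "real \<times> real \<Rightarrow> (real \<times> real) set" where
  "cls v = proj_rel `` {v}"

lemma K2nz_iff: "(x,y) \<in> K2nz \<longleftrightarrow> x \<in> KK \<and> y \<in> KK \<and> (x \<noteq> 0 \<or> y \<noteq> 0)"
  unfolding K2nz_def by auto

lemma cls_iff: "(x',y') \<in> cls (x,y) \<longleftrightarrow>
   (x,y) \<in> K2nz \<and> (x',y') \<in> K2nz \<and> (\<exists>k\<in>KK. k \<noteq> 0 \<and> x' = k*x \<and> y' = k*y)"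
  unfolding cls_def proj_rel_def by simp

lemma scale_K2nz: "(x,y) \<in> K2nz \<Longrightarrow> k \<in> KK \<Longrightarrow> k \<noteq> 0 \<Longrightarrow> (k*x, k*y) \<in> K2nz"
  unfolding K2nz_iff by (auto intro: KK_mult)

lemma cls_self: "(x,y) \<in> K2nz \<Longrightarrow> (x,y) \<in> cls (x,y)"
  unfolding cls_iff by (intro conjI bexI[of _ 1]) auto

lemma cls_scale:
  assumes v: "(x,y) \<in> K2nz" and k: "k \<in> KK" "k \<noteq> 0"
  shows "cls (k*x, k*y) = cls (x,y)"
proof (intro set_eqI)
  fix u :: "real \<times> real"
  obtain p q where u: "u = (p,q)" by force
  have kv: "(k*x, k*y) \<in> K2nz" using scale_K2nz[OF v k] .
  have "(\<exists>k'\<in>KK. k' \<noteq> 0 \<and> p = k'*(k*x) \<and> q = k'*(k*y)) \<longleftrightarrow>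
        (\<exists>k'\<in>KK. k' \<noteq> 0 \<and> p = k'*x \<and> q = k'*y)"
  proof
    assume "\<exists>k'\<in>KK. k' \<noteq> 0 \<and> p = k'*(k*x) \<and> q = k'*(k*y)"
    then obtain k' where "k' \<in> KK" "k' \<noteq> 0" "p = k'*(k*x)" "q = k'*(k*y)" by blast
    thus "\<exists>k'\<in>KK. k' \<noteq> 0 \<and> p = k'*x \<and> q = k'*y"
      using k by (intro bexI[of _ "k'*k"]) (auto intro: KK_mult)
  next
    assume "\<exists>k'\<in>KK. k' \<noteq> 0 \<and> p = k'*x \<and> q = k'*y"
    then obtain k' where "k' \<in> KK" "k' \<noteq> 0" "p = k'*x" "q = k'*y" by blast
    thus "\<exists>k'\<in>KK. k' \<noteq> 0 \<and> p = k'*(k*x) \<and> q = k'*(k*y)"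
      using k by (intro bexI[of _ "k' * inverse k"]) (auto intro: KK_mult KK_inv)
  qed
  thus "u \<in> cls (k*x, k*y) \<longleftrightarrow> u \<in> cls (x,y)" unfolding u cls_iff using v kv by blast
qed

lemma P1K_iff: "P \<in> P1K \<longleftrightarrow> (\<exists>v\<in>K2nz. P = cls v)"
  unfolding P1K_def quotient_def cls_def by blast

lemma SL2O_iff: "(a,b,c,d) \<in> SL2O \<longleftrightarrow> a \<in> OK \<and> b \<in> OK \<and> c \<in> OK \<and> d \<in> OK \<and> a*d - b*c = 1"
  unfolding SL2O_def by simp

lemma Gamma_p_iff: "(a,b,c,d) \<in> Gamma_p \<longleftrightarrow> (a,b,c,d) \<in> SL2O \<and> in_p (a - 1) \<and> in_p b \<and> in_p c \<and> in_p (d - 1)"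
  unfolding Gamma_p_def by simp

lemma mvec_K2nz:
  assumes g: "(a,b,c,d) \<in> SL2O" and v: "(x,y) \<in> K2nz"
  shows "mvec (a,b,c,d) (x,y) \<in> K2nz"
proof -
  have ok: "a \<in> KK" "b \<in> KK" "c \<in> KK" "d \<in> KK" "a*d - b*c = 1" using g unfolding SL2O_iff by (auto intro: OK_KK)
  have xy: "x \<in> KK" "y \<in> KK" "x \<noteq> 0 \<or> y \<noteq> 0" using v unfolding K2nz_iff by auto
  have "a*x + b*y \<noteq> 0 \<or> c*x + d*y \<noteq> 0"
  proof (rule ccontr)
    assume "\<not> ?thesis"
    hence h: "a*x + b*y = 0" "c*x + d*y = 0" by auto
    have "x = d*(a*x + b*y) - b*(c*x + d*y)" using ok(5) by algebra
    moreover have "y = a*(c*x + d*y) - c*(a*x + b*y)" using ok(5) by algebra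
    ultimately show False using h xy(3) by simp
  qed
  thus ?thesis unfolding mvec.simps K2nz_iff using ok xy by (auto intro!: KK_add KK_mult)
qed

lemma act_cls:
  assumes g: "(a,b,c,d) \<in> SL2O" and v: "(x,y) \<in> K2nz"
  shows "act (a,b,c,d) (cls (x,y)) = cls (mvec (a,b,c,d) (x,y))"
proof (intro set_eqI iffI)
  fix u assume "u \<in> act (a,b,c,d) (cls (x,y))"
  then obtain p q where pq: "(p,q) \<in> cls (x,y)" "u = mvec (a,b,c,d) (p,q)" unfolding act_def by force
  then obtain k where k: "k \<in> KK" "k \<noteq> 0" "p = k*x" "q = k*y" unfolding cls_iff by blast
  have "u = (k*(a*x+b*y), k*(c*x+d*y))" using pq(2) k by (simp add: algebra_simps)
  moreover have "u \<in> K2nz" using pq mvec_K2nz[OF g] unfolding cls_iff by auto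
  ultimately show "u \<in> cls (mvec (a,b,c,d) (x,y))"
    using mvec_K2nz[OF g v] k unfolding mvec.simps by (auto simp: cls_iff)
next
  fix u assume "u \<in> cls (mvec (a,b,c,d) (x,y))"
  then obtain p q where pq: "u = (p,q)" "(p,q) \<in> cls (a*x+b*y, c*x+d*y)" by (metis mvec.simps prod.exhaust)
  then obtain k where k: "k \<in> KK" "k \<noteq> 0" "p = k*(a*x+b*y)" "q = k*(c*x+d*y)" unfolding cls_iff by blast
  have "u = mvec (a,b,c,d) (k*x, k*y)" using pq(1) k by (simp add: algebra_simps)
  moreover have "(k*x, k*y) \<in> cls (x,y)" using v scale_K2nz[OF v k(1,2)] k(1,2) unfolding cls_iff by blast
  ultimately show "u \<in> act (a,b,c,d) (cls (x,y))" unfolding act_def by blast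
qed

fun mmul :: "real \<times> real \<times> real \<times> real \<Rightarrow> real \<times> real \<times> real \<times> real \<Rightarrow> real \<times> real \<times> real \<times> real" where
  "mmul (a,b,c,d) (a',b',c',d') = (a*a' + b*c', a*b' + b*d', c*a' + d*c', c*b' + d*d')"

fun minv :: "real \<times> real \<times> real \<times> real \<Rightarrow> real \<times> real \<times> real \<times> real" where
  "minv (a,b,c,d) = (d, -b, -c, a)"

definition Id2 :: "real \<times> real \<times> real \<times> real" where "Id2 = (1,0,0,1)"

lemma mvec_mmul: "mvec (mmul g h) v = mvec g (mvec h v)"
  by (cases g rule: prod_cases4, cases h rule: prod_cases4, cases v) (simp add: algebra_simps)

lemma act_mmul: "act (mmul g h) P = act g (act h P)"
  unfolding act_def by (simp add: image_image mvec_mmul)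

lemma act_Id: "act Id2 P = P"
proof -
  have "mvec Id2 v = v" for v by (cases v) (simp add: Id2_def)
  thus ?thesis unfolding act_def by simp
qed

lemma minv_mmul: "g \<in> SL2O \<Longrightarrow> mmul (minv g) g = Id2"
  by (cases g rule: prod_cases4) (auto simp: SL2O_iff Id2_def algebra_simps)

lemma mmul_minv: "g \<in> SL2O \<Longrightarrow> mmul g (minv g) = Id2"
  by (cases g rule: prod_cases4) (auto simp: SL2O_iff Id2_def algebra_simps)

lemma act_minv: "g \<in> SL2O \<Longrightarrow> act (minv g) (act g P) = P"
  by (metis act_mmul minv_mmul act_Id)

lemma act_minv': "g \<in> SL2O \<Longrightarrow> act g (act (minv g) P) = P"
  by (metis act_mmul mmul_minv act_Id)

lemma minv_minv: "minv (minv g) = g"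
  by (cases g rule: prod_cases4) simp

lemma SL2O_mmul: "g \<in> SL2O \<Longrightarrow> h \<in> SL2O \<Longrightarrow> mmul g h \<in> SL2O"
proof (cases g rule: prod_cases4, cases h rule: prod_cases4)
  fix a b c d a' b' c' d'
  assume g: "g \<in> SL2O" "h \<in> SL2O" "g = (a,b,c,d)" "h = (a',b',c',d')"
  hence ok: "a \<in> OK" "b \<in> OK" "c \<in> OK" "d \<in> OK" "a' \<in> OK" "b' \<in> OK" "c' \<in> OK" "d' \<in> OK"
    "a*d - b*c = 1" "a'*d' - b'*c' = 1" by (auto simp: SL2O_iff)
  have "(a*a' + b*c')*(c*b' + d*d') - (a*b' + b*d')*(c*a' + d*c') = (a*d - b*c)*(a'*d' - b'*c')"
    by (simp add: algebra_simps)
  thus "mmul g h \<in> SL2O" unfolding g(3,4) mmul.simps SL2O_iff using ok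
    by (auto intro!: OK_add OK_mult)
qed

lemma SL2O_minv: "g \<in> SL2O \<Longrightarrow> minv g \<in> SL2O"
  by (cases g rule: prod_cases4) (auto simp: SL2O_iff algebra_simps intro: OK_minus)

lemma SL2O_Id: "Id2 \<in> SL2O"
  unfolding Id2_def SL2O_iff by simp

lemma Gamma_SL2O: "g \<in> Gamma_p \<Longrightarrow> g \<in> SL2O"
  by (cases g rule: prod_cases4) (simp add: Gamma_p_iff)

lemma Gamma_Id: "Id2 \<in> Gamma_p"
  unfolding Id2_def Gamma_p_iff using SL2O_Id unfolding Id2_def by simp

lemma Gamma_minv: "g \<in> Gamma_p \<Longrightarrow> minv g \<in> Gamma_p"
proof (cases g rule: prod_cases4)
  fix a b c d assume g: "g \<in> Gamma_p" "g = (a,b,c,d)"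
  hence "minv g \<in> SL2O" using SL2O_minv Gamma_SL2O by blast
  moreover have "in_p (d - 1)" "in_p (- b)" "in_p (- c)" "in_p (a - 1)"
    using g by (auto simp: Gamma_p_iff intro: in_p_minus)
  ultimately show ?thesis unfolding g(2) minv.simps Gamma_p_iff by simp
qed

lemma Gamma_mmul: "g \<in> Gamma_p \<Longrightarrow> h \<in> Gamma_p \<Longrightarrow> mmul g h \<in> Gamma_p"
proof (cases g rule: prod_cases4, cases h rule: prod_cases4)
  fix a b c d a' b' c' d'
  assume g: "g \<in> Gamma_p" "h \<in> Gamma_p" "g = (a,b,c,d)" "h = (a',b',c',d')"
  hence sl: "mmul g h \<in> SL2O" using SL2O_mmul Gamma_SL2O by blast
  from g have ok: "a \<in> OK" "b \<in> OK" "c \<in> OK" "d \<in> OK" "a' \<in> OK" "b' \<in> OK" "c' \<in> OK" "d' \<in> OK"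
    by (auto simp: Gamma_p_iff SL2O_iff)
  from g have p: "in_p (a - 1)" "in_p b" "in_p c" "in_p (d - 1)" "in_p (a' - 1)" "in_p b'" "in_p c'" "in_p (d' - 1)"
    by (auto simp: Gamma_p_iff)
  have e1: "a*a' + b*c' - 1 = (a - 1)*a' + (a' - 1) + b*c'" by (simp add: algebra_simps)
  have e2: "c*b' + d*d' - 1 = c*b' + (d - 1)*d' + (d' - 1)" by (simp add: algebra_simps)
  have "in_p (a*a' + b*c' - 1)" unfolding e1 using ok p by (intro in_p_add in_p_mult') auto
  moreover have "in_p (a*b' + b*d')" using ok p by (intro in_p_add in_p_mult in_p_mult') auto
  moreover have "in_p (c*a' + d*c')" using ok p by (intro in_p_add in_p_mult in_p_mult') auto
  moreover have "in_p (c*b' + d*d' - 1)" unfolding e2 using ok p by (intro in_p_add in_p_mult in_p_mult') auto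
  ultimately show "mmul g h \<in> Gamma_p" using sl unfolding g(3,4) mmul.simps Gamma_p_iff by simp
qed

lemma Gamma_normal:
  assumes g: "g \<in> SL2O" and h: "h \<in> Gamma_p"
  shows "mmul (mmul g h) (minv g) \<in> Gamma_p"
proof (cases g rule: prod_cases4, cases h rule: prod_cases4)
  fix a b c d a' b' c' d'
  assume gg: "g = (a,b,c,d)" and hh: "h = (a',b',c',d')"
  have sl: "mmul (mmul g h) (minv g) \<in> SL2O" by (intro SL2O_mmul SL2O_minv g Gamma_SL2O[OF h])
  from g h have ok: "a \<in> OK" "b \<in> OK" "c \<in> OK" "d \<in> OK" and det: "a*d - b*c = 1"
    by (auto simp: gg hh Gamma_p_iff SL2O_iff)
  from h have p: "in_p (a' - 1)" "in_p b'" "in_p c'" "in_p (d' - 1)"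
    by (auto simp: hh Gamma_p_iff)
  define e1 where "e1 = a' - 1"
  define e4 where "e4 = d' - 1"
  have a': "a' = 1 + e1" and d': "d' = 1 + e4" unfolding e1_def e4_def by simp_all
  have m: "mmul (mmul g h) (minv g) =
    ((a*a' + b*c')*d - (a*b' + b*d')*c, -(a*a' + b*c')*b + (a*b' + b*d')*a,
     (c*a' + d*c')*d - (c*b' + d*d')*c, -(c*a' + d*c')*b + (c*b' + d*d')*a)"
    unfolding gg hh by (simp add: algebra_simps)
  have q1: "(a*a' + b*c')*d - (a*b' + b*d')*c - 1 = (a*d)*e1 + (b*d)*c' - (a*c)*b' - (b*c)*e4"
    using det unfolding a' d' by algebra
  have q2: "-(a*a' + b*c')*b + (a*b' + b*d')*a = -(a*b)*e1 - (b*b)*c' + (a*a)*b' + (b*a)*e4"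
    unfolding a' d' by algebra
  have q3: "(c*a' + d*c')*d - (c*b' + d*d')*c = (c*d)*e1 + (d*d)*c' - (c*c)*b' - (d*c)*e4"
    unfolding a' d' by algebra
  have q4: "-(c*a' + d*c')*b + (c*b' + d*d')*a - 1 = -(c*b)*e1 - (d*b)*c' + (c*a)*b' + (d*a)*e4"
    using det unfolding a' d' by algebra
  have pe: "in_p e1" "in_p e4" using p unfolding e1_def e4_def by auto
  have okm: "a*d \<in> OK" "b*d \<in> OK" "a*c \<in> OK" "b*c \<in> OK" "a*b \<in> OK" "b*b \<in> OK" "a*a \<in> OK"
    "b*a \<in> OK" "c*d \<in> OK" "d*d \<in> OK" "c*c \<in> OK" "d*c \<in> OK" "c*b \<in> OK" "d*b \<in> OK" "c*a \<in> OK"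
    "d*a \<in> OK" using ok by (auto intro: OK_mult)
  have "in_p ((a*d)*e1 + (b*d)*c' - (a*c)*b' - (b*c)*e4)"
    using okm pe p by (intro in_p_add in_p_diff in_p_mult) auto
  moreover have "in_p (-(a*b)*e1 - (b*b)*c' + (a*a)*b' + (b*a)*e4)"
    using okm pe p by (intro in_p_add in_p_diff in_p_mult OK_minus) auto
  moreover have "in_p ((c*d)*e1 + (d*d)*c' - (c*c)*b' - (d*c)*e4)"
    using okm pe p by (intro in_p_add in_p_diff in_p_mult) auto
  moreover have "in_p (-(c*b)*e1 - (d*b)*c' + (c*a)*b' + (d*a)*e4)"
    using okm pe p by (intro in_p_add in_p_diff in_p_mult OK_minus) auto
  ultimately show ?thesis using sl unfolding m Gamma_p_iff q1 q2 q3 q4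
    by (simp only: q1[symmetric] q2[symmetric] q3[symmetric] q4[symmetric] m[symmetric])
qed

lemma KK_nat [simp]: "of_nat n \<in> KK" by (simp add: OK_KK)

definition rep :: "nat \<Rightarrow> real \<times> real" where
  "rep j = (if j < 7 then (of_nat j, 1) else (1, 0))"

lemma rep_K2nz: "rep j \<in> K2nz"
  by (cases "j < 7") (simp_all add: rep_def K2nz_iff)

lemma prim:
  assumes v: "(x,y) \<in> K2nz"
  shows "\<exists>a b c d k. (a,b,c,d) \<in> SL2O \<and> k \<in> KK \<and> k \<noteq> 0 \<and> a = k*x \<and> c = k*y"
proof -
  have xy: "x \<in> KK" "y \<in> KK" "x \<noteq> 0 \<or> y \<noteq> 0" using v unfolding K2nz_iff by auto
  obtain m1 :: int where m1: "m1 > 0" "of_int m1 * x \<in> OK" using xy(1) unfolding KK_char by blast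
  obtain m2 :: int where m2: "m2 > 0" "of_int m2 * y \<in> OK" using xy(2) unfolding KK_char by blast
  define m where "m = m1 * m2"
  have m0: "m > 0" unfolding m_def using m1 m2 by simp
  define x0 where "x0 = of_int m * x"
  define y0 where "y0 = of_int m * y"
  have x0: "x0 \<in> OK" unfolding x0_def m_def using OK_mult[OF OK_int[of m2] m1(2)] by (simp add: algebra_simps)
  have y0: "y0 \<in> OK" unfolding y0_def m_def using OK_mult[OF OK_int[of m1] m2(2)] by (simp add: algebra_simps)
  obtain d0 al be u v' where b: "d0 \<in> OK" "al \<in> OK" "be \<in> OK" "u \<in> OK" "v' \<in> OK"
    "d0 = al*x0 + be*y0" "x0 = u*d0" "y0 = v'*d0" using bezout[OF x0 y0] by blast
  have d00: "d0 \<noteq> 0"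
  proof
    assume "d0 = 0"
    hence "x0 = 0" "y0 = 0" using b(7,8) by simp_all
    thus False using xy(3) m0 unfolding x0_def y0_def by auto
  qed
  have "(al*u + be*v' - 1) * d0 = 0" using b(6,7,8) by algebra
  hence det: "al*u + be*v' = 1" using d00 by simp
  define k where "k = of_int m * inverse d0"
  have kK: "k \<in> KK" unfolding k_def using OK_inv[OF b(1) d00] by (intro KK_mult) auto
  have k0: "k \<noteq> 0" unfolding k_def using m0 d00 by simp
  have "of_int m * x = u * d0" "of_int m * y = v' * d0" using b(7,8) unfolding x0_def y0_def by simp_all
  hence "u = k*x" "v' = k*y" unfolding k_def using d00 by (simp_all add: field_simps)
  moreover have "(u, -be, v', al) \<in> SL2O" unfolding SL2O_iff using b(2-5) det
    by (auto intro: OK_minus simp: algebra_simps)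
  ultimately show ?thesis using kK k0 by blast
qed

lemma SL2O_scale:
  assumes "(a,b,c,d) \<in> SL2O" "u \<in> OK" "u' \<in> OK" "u * u' = 1"
  shows "(u*a, u'*b, u*c, u'*d) \<in> SL2O"
proof -
  have "(u*a)*(u'*d) - (u'*b)*(u*c) = (u*u')*(a*d - b*c)" by (simp add: algebra_simps)
  thus ?thesis using assms unfolding SL2O_iff by (auto intro: OK_mult)
qed

lemma normal_form:
  assumes v: "(x,y) \<in> K2nz"
  shows "\<exists>a b c d k. (a,b,c,d) \<in> SL2O \<and> k \<in> KK \<and> k \<noteq> 0 \<and> a = k*x \<and> c = k*y \<and>
     ((\<exists>j::nat. j < 7 \<and> in_p (a - of_nat j) \<and> in_p (c - 1)) \<or> (in_p (a - 1) \<and> in_p c))"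
proof -
  obtain a b c d k where g: "(a,b,c,d) \<in> SL2O" "k \<in> KK" "k \<noteq> 0" "a = k*x" "c = k*y"
    using prim[OF v] by blast
  have ok: "a \<in> OK" "b \<in> OK" "c \<in> OK" "d \<in> OK" "a*d - b*c = 1" using g(1) unfolding SL2O_iff by auto
  have scale: "(u*a, u'*b, u*c, u'*d) \<in> SL2O \<and> u*k \<in> KK \<and> u*k \<noteq> 0 \<and> u*a = (u*k)*x \<and> u*c = (u*k)*y"
    if "u \<in> OK" "u' \<in> OK" "u*u' = 1" for u u'
    using SL2O_scale[OF g(1) that] that g(2-5) by (auto intro: KK_mult OK_KK)
  obtain nc :: int where nc: "in_p (c - of_int nc)" using residue[OF ok(3)] by blast
  show ?thesis
  proof (cases "7 dvd nc")
    case False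
    obtain u u' where u: "u \<in> OK" "u' \<in> OK" "u*u' = 1" "in_p (u * of_int nc - 1)"
      using unit_choice[OF False] by blast
    have eqc: "u*c - 1 = u*(c - of_int nc) + (u * of_int nc - 1)" by (simp add: algebra_simps)
    have c1: "in_p (u*c - 1)" unfolding eqc by (intro in_p_add in_p_mult u nc)
    obtain n :: int where n: "0 \<le> n" "n < 7" "in_p (u*a - of_int n)" using residue7[OF OK_mult[OF u(1) ok(1)]] by blast
    have "of_nat (nat n) = (of_int n :: real)" using n(1) by simp
    hence "\<exists>j::nat. j < 7 \<and> in_p (u*a - of_nat j) \<and> in_p (u*c - 1)"
      using n c1 by (intro exI[of _ "nat n"]) auto
    thus ?thesis using scale[OF u(1-3)] by blast
  next
    case True
    have cp: "in_p c"
    proof -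
      have "c = (c - of_int nc) + of_int nc" by simp
      thus ?thesis using in_p_add[OF nc in_p_int_dvd[OF True]] by simp
    qed
    obtain na :: int where na: "in_p (a - of_int na)" using residue[OF ok(1)] by blast
    have "\<not> 7 dvd na"
    proof
      assume "7 dvd na"
      hence ap: "in_p a"
      proof -
        have "a = (a - of_int na) + of_int na" by simp
        thus ?thesis using in_p_add[OF na in_p_int_dvd[OF \<open>7 dvd na\<close>]] by simp
      qed
      have "in_p (d*a - b*c)" by (intro in_p_diff in_p_mult ok ap cp)
      thus False using ok(5) not_in_p_1 by (simp add: mult.commute)
    qed
    then obtain u u' where u: "u \<in> OK" "u' \<in> OK" "u*u' = 1" "in_p (u * of_int na - 1)"
      using unit_choice by blast
    have eqa: "u*a - 1 = u*(a - of_int na) + (u * of_int na - 1)" by (simp add: algebra_simps)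
    have a1: "in_p (u*a - 1)" unfolding eqa by (intro in_p_add in_p_mult u na)
    have "in_p (u*c)" by (intro in_p_mult u cp)
    thus ?thesis using scale[OF u(1-3)] a1 by blast
  qed
qed

lemma main_surj:
  assumes P: "P \<in> P1K"
  shows "\<exists>j<8. \<exists>g\<in>Gamma_p. P = act g (cls (rep j))"
proof -
  obtain x y where v: "(x,y) \<in> K2nz" "P = cls (x,y)" using P unfolding P1K_iff by auto
  obtain a b c d k where g: "(a,b,c,d) \<in> SL2O" "k \<in> KK" "k \<noteq> 0" "a = k*x" "c = k*y"
    and nf: "(\<exists>j::nat. j < 7 \<and> in_p (a - of_nat j) \<and> in_p (c - 1)) \<or> (in_p (a - 1) \<and> in_p c)"
    using normal_form[OF v(1)] by blast
  have ok: "a \<in> OK" "b \<in> OK" "c \<in> OK" "d \<in> OK" and det: "a*d - b*c = 1" using g(1) unfolding SL2O_iff by auto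
  have Pac: "P = cls (a,c)" unfolding v(2) g(4,5) using cls_scale[OF v(1) g(2,3)] by simp
  from nf show ?thesis
  proof
    assume "\<exists>j::nat. j < 7 \<and> in_p (a - of_nat j) \<and> in_p (c - 1)"
    then obtain j :: nat where j: "j < 7" "in_p (a - of_nat j)" "in_p (c - 1)" by blast
    define t where "t = (of_nat j :: real)"
    have tOK: "t \<in> OK" unfolding t_def by simp
    define ga where "ga = (a*d - b, a + t*(b - a*d), c*d - d, c + t*(d - c*d))"
    have mv: "mvec ga (rep j) = (a, c)" unfolding ga_def rep_def t_def using j(1) by (simp add: algebra_simps)
    have gOK: "a*d - b \<in> OK" "a + t*(b - a*d) \<in> OK" "c*d - d \<in> OK" "c + t*(d - c*d) \<in> OK"
      using ok tOK by (auto intro!: OK_add OK_diff OK_mult)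
    have "(a*d - b)*(c + t*(d - c*d)) - (a + t*(b - a*d))*(c*d - d) = a*d - b*c" by algebra
    hence gsl: "ga \<in> SL2O" unfolding ga_def SL2O_iff using gOK det by simp
    have e1: "a*d - b - 1 = b*(c - 1)" using det by algebra
    have e2: "a + t*(b - a*d) = (a - t) - (t*b)*(c - 1)" using det by algebra
    have e3: "c*d - d = d*(c - 1)" by algebra
    have e4: "c + t*(d - c*d) - 1 = (1 - t*d)*(c - 1)" by algebra
    have p: "in_p (a*d - b - 1)" "in_p (a + t*(b - a*d))" "in_p (c*d - d)" "in_p (c + t*(d - c*d) - 1)"
      unfolding e1 e2 e3 e4 using j ok tOK unfolding t_def[symmetric]
      by (auto intro!: in_p_mult in_p_diff OK_mult OK_diff)
    have gG: "ga \<in> Gamma_p" unfolding Gamma_p_iff using gsl p unfolding ga_def by (simp add: Gamma_p_iff)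
    have repj: "rep j = (t, 1)" unfolding rep_def t_def using j(1) by simp
    have "act ga (cls (rep j)) = cls (mvec ga (rep j))" unfolding ga_def repj
      by (rule act_cls[OF gsl[unfolded ga_def] rep_K2nz[of j, unfolded repj]])
    hence "act ga (cls (rep j)) = cls (a,c)" using mv by simp
    thus ?thesis using gG j(1) Pac by (intro exI[of _ j]) auto
  next
    assume h: "in_p (a - 1) \<and> in_p c"
    define ga where "ga = (a, b - a*b, c, d - c*b)"
    have mv: "mvec ga (rep 7) = (a, c)" unfolding ga_def rep_def by simp
    have gOK: "b - a*b \<in> OK" "d - c*b \<in> OK" using ok by (auto intro!: OK_diff OK_mult)
    have "a*(d - c*b) - (b - a*b)*c = a*d - b*c" by algebra
    hence gsl: "ga \<in> SL2O" unfolding ga_def SL2O_iff using gOK ok det by simp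
    have e2: "b - a*b = (-b)*(a - 1)" by algebra
    have e4: "d - c*b - 1 = (-d)*(a - 1)" using det by algebra
    have p: "in_p (b - a*b)" "in_p (d - c*b - 1)"
      unfolding e2 e4 using h ok by (auto intro!: in_p_minus in_p_mult)
    have gG: "ga \<in> Gamma_p" unfolding Gamma_p_iff using gsl p h unfolding ga_def by (simp add: Gamma_p_iff)
    have rep7: "rep 7 = (1, 0)" unfolding rep_def by simp
    have "act ga (cls (rep 7)) = cls (mvec ga (rep 7))" unfolding ga_def rep7
      by (rule act_cls[OF gsl[unfolded ga_def] rep_K2nz[of 7, unfolded rep7]])
    hence "act ga (cls (rep 7)) = cls (a,c)" using mv by simp
    thus ?thesis using gG Pac by (intro exI[of _ 7]) auto
  qed
qed

lemma int_lt7_p: assumes "in_p (of_nat i - of_nat j)" "i < 7" "j < 7" shows "i = (j::nat)"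
proof -
  have "in_p (of_int (int i - int j))" using assms(1) by simp
  hence "7 dvd (int i - int j)" unfolding in_p_int .
  thus ?thesis using assms(2,3) by presburger
qed

lemma distinct_reps:
  assumes i: "i < 8" and j: "j < 8" and g: "g \<in> Gamma_p" and eq: "act g (cls (rep i)) = cls (rep j)"
  shows "i = j"
proof -
  obtain a b c d where gg: "g = (a,b,c,d)" by (cases g rule: prod_cases4)
  have gs: "(a,b,c,d) \<in> SL2O" using Gamma_SL2O g gg by simp
  have ok: "a \<in> OK" "b \<in> OK" "c \<in> OK" "d \<in> OK" using gs unfolding SL2O_iff by auto
  have p: "in_p (a - 1)" "in_p b" "in_p c" "in_p (d - 1)" using g unfolding gg Gamma_p_iff by auto
  obtain x y where xy: "rep i = (x,y)" by force
  obtain x' y' where xy': "rep j = (x',y')" by force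
  have "act g (cls (rep i)) = cls (mvec g (rep i))" unfolding gg xy
    by (rule act_cls[OF gs rep_K2nz[of i, unfolded xy]])
  hence "rep j \<in> cls (mvec g (rep i))" using eq cls_self[OF rep_K2nz[of j, unfolded xy']] xy' by simp
  then obtain k where k: "k \<noteq> 0" "x' = k*(a*x + b*y)" "y' = k*(c*x + d*y)"
    unfolding gg xy xy' mvec.simps cls_iff by blast
  show ?thesis
  proof (cases "i < 7")
    case True
    hence xi: "x = of_nat i" "y = 1" using xy unfolding rep_def by auto
    show ?thesis
    proof (cases "j < 7")
      case True
      hence xj: "x' = of_nat j" "y' = 1" using xy' unfolding rep_def by auto
      define X where "X = a * of_nat i + b"
      define Y where "Y = c * of_nat i + d"
      have kk: "of_nat j = k*X" "1 = k*Y" using k unfolding xi xj X_def Y_def by auto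
      have XY: "X = of_nat j * Y" using kk by (metis mult.assoc mult.commute mult_1_right)
      have eqX: "X - of_nat i = of_nat i * (a - 1) + b" unfolding X_def by (simp add: algebra_simps)
      have eqY: "Y - 1 = of_nat i * c + (d - 1)" unfolding Y_def by (simp add: algebra_simps)
      have pX: "in_p (X - of_nat i)" unfolding eqX by (intro in_p_add in_p_mult OK_nat p)
      have pY: "in_p (Y - 1)" unfolding eqY by (intro in_p_add in_p_mult OK_nat p)
      have "in_p (of_nat j * (Y - 1) - (X - of_nat i))" using in_p_diff[OF in_p_mult[OF OK_nat[of j] pY] pX] .
      moreover have "of_nat j * (Y - 1) - (X - of_nat i) = (of_nat i - of_nat j :: real)"
        using XY by (simp add: algebra_simps)
      ultimately have "in_p (of_nat i - of_nat j)" by simp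
      thus ?thesis using int_lt7_p \<open>i < 7\<close> \<open>j < 7\<close> by blast
    next
      case False
      hence xj: "x' = 1" "y' = 0" using xy' unfolding rep_def by auto
      have "c * of_nat i + d = 0" using k(1,3) unfolding xi xj by simp
      hence eqm: "-1 = of_nat i * c + (d - 1)" by (simp add: algebra_simps)
      have "in_p (-1)" unfolding eqm by (intro in_p_add in_p_mult OK_nat p)
      hence "in_p 1" using in_p_minus by fastforce
      thus ?thesis using not_in_p_1 by simp
    qed
  next
    case False
    hence xi: "x = 1" "y = 0" using xy unfolding rep_def by auto
    show ?thesis
    proof (cases "j < 7")
      case True
      hence xj: "x' = of_nat j" "y' = 1" using xy' unfolding rep_def by auto
      have kk: "of_nat j = k*a" "1 = k*c" using k unfolding xi xj by auto
      have "a = of_nat j * c" using kk by (metis mult.assoc mult.commute mult_1_right)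
      hence "in_p a" by (simp only:) (intro in_p_mult OK_nat p)
      hence "in_p (a - (a - 1))" using p(1) by (rule in_p_diff)
      thus ?thesis using not_in_p_1 by simp
    next
      case False
      thus ?thesis using \<open>\<not> i < 7\<close> i j by simp
    qed
  qed
qed

section \<open>Cusps\<close>

lemma cusp_rel_iff: "(P,Q) \<in> cusp_rel \<longleftrightarrow> P \<in> P1K \<and> Q \<in> P1K \<and> (\<exists>g\<in>Gamma_p. Q = act g P)"
  unfolding cusp_rel_def by simp

lemma act_P1K: assumes "g \<in> SL2O" "P \<in> P1K" shows "act g P \<in> P1K"
proof -
  obtain x y where v: "(x,y) \<in> K2nz" "P = cls (x,y)" using assms(2) unfolding P1K_iff by auto
  obtain a b c d where gg: "g = (a,b,c,d)" by (cases g rule: prod_cases4)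
  have "act g P = cls (mvec g (x,y))" unfolding v(2) gg by (rule act_cls[OF assms(1)[unfolded gg] v(1)])
  thus ?thesis unfolding P1K_iff using mvec_K2nz[OF assms(1)[unfolded gg] v(1)] gg by auto
qed

lemma cusp_equiv: "equiv P1K cusp_rel"
proof (rule equivI)
  show "cusp_rel \<subseteq> P1K \<times> P1K" unfolding cusp_rel_def by auto
  show "refl_on P1K cusp_rel"
  proof (rule refl_onI)
    fix P assume "P \<in> P1K"
    thus "(P,P) \<in> cusp_rel" unfolding cusp_rel_iff using Gamma_Id act_Id by metis
  qed
  show "sym cusp_rel"
  proof (rule symI)
    fix P Q assume "(P,Q) \<in> cusp_rel"
    then obtain g where g: "P \<in> P1K" "Q \<in> P1K" "g \<in> Gamma_p" "Q = act g P" unfolding cusp_rel_iff by blast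
    have "P = act (minv g) Q" using g act_minv[OF Gamma_SL2O[OF g(3)]] by simp
    thus "(Q,P) \<in> cusp_rel" unfolding cusp_rel_iff using g Gamma_minv by blast
  qed
  show "trans cusp_rel"
  proof (rule transI)
    fix P Q R assume "(P,Q) \<in> cusp_rel" "(Q,R) \<in> cusp_rel"
    then obtain g h where g: "P \<in> P1K" "R \<in> P1K" "g \<in> Gamma_p" "Q = act g P" "h \<in> Gamma_p" "R = act h Q"
      unfolding cusp_rel_iff by blast
    have "R = act (mmul h g) P" using g by (simp add: act_mmul)
    thus "(P,R) \<in> cusp_rel" unfolding cusp_rel_iff using g Gamma_mmul by blast
  qed
qed

lemma cusps_eq: "cusps = (\<lambda>j. cusp_rel `` {cls (rep j)}) ` {..<8}"
proof (intro set_eqI iffI)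
  fix C assume "C \<in> cusps"
  then obtain P where P: "P \<in> P1K" "C = cusp_rel `` {P}" unfolding cusps_def quotient_def by blast
  obtain j g where jg: "j < 8" "g \<in> Gamma_p" "P = act g (cls (rep j))" using main_surj[OF P(1)] by blast
  have cP: "cls (rep j) \<in> P1K" unfolding P1K_iff using rep_K2nz by blast
  have "(cls (rep j), P) \<in> cusp_rel" unfolding cusp_rel_iff using cP P(1) jg by blast
  hence "cusp_rel `` {cls (rep j)} = cusp_rel `` {P}" using equiv_class_eq[OF cusp_equiv] by blast
  thus "C \<in> (\<lambda>j. cusp_rel `` {cls (rep j)}) ` {..<8}" using P(2) jg(1) by auto
next
  fix C assume "C \<in> (\<lambda>j. cusp_rel `` {cls (rep j)}) ` {..<8}"
  then obtain j where "C = cusp_rel `` {cls (rep j)}" by blast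
  moreover have "cls (rep j) \<in> P1K" unfolding P1K_iff using rep_K2nz by blast
  ultimately show "C \<in> cusps" unfolding cusps_def quotient_def by blast
qed

lemma cusps_inj: "inj_on (\<lambda>j. cusp_rel `` {cls (rep j)}) {..<8}"
proof (rule inj_onI)
  fix i j assume ij: "i \<in> {..<(8::nat)}" "j \<in> {..<(8::nat)}" and e: "cusp_rel `` {cls (rep i)} = cusp_rel `` {cls (rep j)}"
  have "cls (rep i) \<in> P1K" "cls (rep j) \<in> P1K" unfolding P1K_iff using rep_K2nz by blast+
  hence "(cls (rep i), cls (rep j)) \<in> cusp_rel" using eq_equiv_class_iff[OF cusp_equiv] e by blast
  then obtain g where "g \<in> Gamma_p" "cls (rep j) = act g (cls (rep i))" unfolding cusp_rel_iff by blast
  thus "i = j" using distinct_reps ij by auto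
qed

lemma class_eq: assumes "P \<in> P1K" shows "cusp_rel `` {P} = (\<lambda>g. act g P) ` Gamma_p"
proof (intro set_eqI iffI)
  fix Q assume "Q \<in> cusp_rel `` {P}"
  hence "(P,Q) \<in> cusp_rel" by simp
  thus "Q \<in> (\<lambda>g. act g P) ` Gamma_p" unfolding cusp_rel_iff by blast
next
  fix Q assume "Q \<in> (\<lambda>g. act g P) ` Gamma_p"
  then obtain g where g: "g \<in> Gamma_p" "Q = act g P" by blast
  have "Q \<in> P1K" using act_P1K[OF Gamma_SL2O[OF g(1)] assms] g(2) by simp
  hence "(P,Q) \<in> cusp_rel" unfolding cusp_rel_iff using assms g by blast
  thus "Q \<in> cusp_rel `` {P}" by simp
qed

definition HH :: "nat \<Rightarrow> real \<times> real \<times> real \<times> real" where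
  "HH j = (if j < 7 then (of_nat j, -1, 1, 0) else Id2)"

lemma HH_SL2O: "HH j \<in> SL2O"
  unfolding HH_def using SL2O_Id by (auto simp: SL2O_iff intro: OK_minus)

lemma HH_rep: "mvec (HH j) (1,0) = rep j"
  unfolding HH_def rep_def Id2_def by simp

lemma act_cls_SL2O: assumes "g \<in> SL2O" "v \<in> K2nz" shows "act g (cls v) = cls (mvec g v)"
proof -
  obtain a b c d where gg: "g = (a,b,c,d)" by (cases g rule: prod_cases4)
  obtain x y where v: "v = (x,y)" by force
  show ?thesis unfolding gg v by (rule act_cls[OF assms[unfolded gg v]])
qed

lemma rep_move: "\<exists>h\<in>SL2O. act h (cls (rep i)) = cls (rep j)"
proof -
  define h where "h = mmul (HH j) (minv (HH i))"
  have hs: "h \<in> SL2O" unfolding h_def by (intro SL2O_mmul SL2O_minv HH_SL2O)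
  have m1: "mvec (minv (HH i)) (rep i) = (1,0)"
  proof -
    have "mvec (minv (HH i)) (rep i) = mvec (mmul (minv (HH i)) (HH i)) (1,0)"
      unfolding mvec_mmul HH_rep ..
    also have "\<dots> = (1,0)" unfolding minv_mmul[OF HH_SL2O] Id2_def by simp
    finally show ?thesis .
  qed
  have "mvec h (rep i) = rep j" unfolding h_def mvec_mmul m1 by (rule HH_rep)
  thus ?thesis using act_cls_SL2O[OF hs rep_K2nz[of i]] hs by auto
qed

theorem lemma3p1:
  shows "card cusps = 8 \<and>
         (\<forall>C\<in>cusps. \<forall>D\<in>cusps. \<exists>g\<in>SL2O. act g ` C = D)"
proof
  show "card cusps = 8" unfolding cusps_eq using card_image[OF cusps_inj] by simp
next
  show "\<forall>C\<in>cusps. \<forall>D\<in>cusps. \<exists>g\<in>SL2O. act g ` C = D"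
  proof (intro ballI)
    fix C D assume C: "C \<in> cusps" and D: "D \<in> cusps"
    obtain P where P: "P \<in> P1K" "C = cusp_rel `` {P}" using C unfolding cusps_def quotient_def by blast
    obtain Q where Q: "Q \<in> P1K" "D = cusp_rel `` {Q}" using D unfolding cusps_def quotient_def by blast
    obtain i ga where i: "ga \<in> Gamma_p" "P = act ga (cls (rep i))" using main_surj[OF P(1)] by blast
    obtain j gb where j: "gb \<in> Gamma_p" "Q = act gb (cls (rep j))" using main_surj[OF Q(1)] by blast
    obtain h where h: "h \<in> SL2O" "act h (cls (rep i)) = cls (rep j)" using rep_move by blast
    define g where "g = mmul gb (mmul h (minv ga))"
    have gs: "g \<in> SL2O" unfolding g_def
      by (intro SL2O_mmul SL2O_minv h(1) Gamma_SL2O[OF i(1)] Gamma_SL2O[OF j(1)])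
    have gP: "act g P = Q"
      unfolding g_def act_mmul i(2) act_minv[OF Gamma_SL2O[OF i(1)]] h(2) j(2) ..
    have "act g ` C = (\<lambda>d. act g (act d P)) ` Gamma_p" unfolding P(2) class_eq[OF P(1)] image_image ..
    also have "\<dots> = (\<lambda>e. act e Q) ` Gamma_p"
    proof (intro set_eqI iffI)
      fix R assume "R \<in> (\<lambda>d. act g (act d P)) ` Gamma_p"
      then obtain d where d: "d \<in> Gamma_p" "R = act g (act d P)" by blast
      have "R = act (mmul (mmul g d) (minv g)) Q"
        unfolding d(2) gP[symmetric] act_mmul act_minv[OF gs] ..
      moreover have "mmul (mmul g d) (minv g) \<in> Gamma_p" by (rule Gamma_normal[OF gs d(1)])
      ultimately show "R \<in> (\<lambda>e. act e Q) ` Gamma_p" by blast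
    next
      fix R assume "R \<in> (\<lambda>e. act e Q) ` Gamma_p"
      then obtain e where e: "e \<in> Gamma_p" "R = act e Q" by blast
      define d where "d = mmul (mmul (minv g) e) (minv (minv g))"
      have dG: "d \<in> Gamma_p" unfolding d_def by (rule Gamma_normal[OF SL2O_minv[OF gs] e(1)])
      have "act g (act d P) = R"
        unfolding d_def minv_minv act_mmul act_minv'[OF gs] gP e(2) ..
      thus "R \<in> (\<lambda>d. act g (act d P)) ` Gamma_p" using dG by blast
    qed
    also have "\<dots> = D" unfolding Q(2) class_eq[OF Q(1)] ..
    finally show "\<exists>g\<in>SL2O. act g ` C = D" using gs by blast
  qed
qed

end
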